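(* Let $\Sigma$ be a finite alphabet, let $n$ be a positive integer and let $\varphi\in\mathrm{FO}^2_n[<]$ be a unique position formula. Then there are $k\in\mathbb{N}$, pairwise mutually exclusive formulas $\alpha_1,\dots,\alpha_k\in\mathrm{FO}^2_n[<]$ and rankers $r_1,\dots,r_k\in R_n^\star$ such that $$\varphi\equiv\bigvee_{i\in[1,k]}\bigl(\alpha_i\wedge\psi_{r_i}\bigr),$$ where for each ranker $r\in R_n^\star$, $\psi_r\in\mathrm{FO}^2_n[<]$ denotes a formula with free variable $x$ such that for all $w\in\Sigma^\star$ and $i\in[1,|w|]$, $(w,i)\models\psi_r$ iff $i=r(w)$.
   Context: Words are finite structures with universe $\{1,\dots,|w|\}$, unary predicates $Q_a$ ($a\in\Sigma$) marking the positions carrying letter $a$, and the order $<$. $\mathrm{FO}^2_n[<]$ is first-order logic over this signature using only the variables $x,y$, with quantifier depth at most $n$. $(w,i)$ denotes $w$ with $x$ interpreted as $i$. A formula $\varphi\in\mathrm{FO}^2[<]$ with free variable $x$ is a unique position formula if for every $w\in\Sigma^\star$ there is at most one $i\in[1,|w|]$ with $(w,i)\models\varphi$. Boundary positions: for $a\in\Sigma$, $\triangleright_a(w)=\min\{i: w_i=a\}$, $\triangleleft_a(w)=\max\{i: w_i=a\}$, $\triangleright_a(w,q)=\min\{i\in[q+1,|w|]:w_i=a\}$, $\triangleleft_a(w,q)=\max\{i\in[1,q-1]:w_i=a\}$ (undefined if empty). An $n$-ranker is a sequence $r=(p_1,\dots,p_n)$ of boundary positions with $r(w)=p_1(w)$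 if $n=1$, undefined if $(p_1,\dots,p_{n-1})(w)$ is undefined, and $p_n(w,(p_1,\dots,p_{n-1})(w))$ otherwise. $R_n^\star$ is the set of all $i$-rankers for $i\in[1,n]$. *)

theory Defs
  imports Main
begin

datatype var = X | Y

datatype 'a fo2 =
    FTrue
  | Less var var
  | Equal var var
  | Letter 'a var
  | Neg "'a fo2"
  | Conj "'a fo2" "'a fo2"
  | Disj "'a fo2" "'a fo2"
  | Exists var "'a fo2"
  | Forall var "'a fo2"

text \<open>Words are lists; positions are 1..length w; letter at position p is w!(p-1).\<close>

fun sat :: "'a list \<Rightarrow> (var \<Rightarrow> nat) \<Rightarrow> 'a fo2 \<Rightarrow> bool" where
  "sat w v FTrue = True"
| "sat w v (Less u u') = (v u < v u')"
| "sat w v (Equal u u') = (v u = v u')"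
| "sat w v (Letter a u) = (1 \<le> v u \<and> v u \<le> length w \<and> w ! (v u - 1) = a)"
| "sat w v (Neg f) = (\<not> sat w v f)"
| "sat w v (Conj f g) = (sat w v f \<and> sat w v g)"
| "sat w v (Disj f g) = (sat w v f \<or> sat w v g)"
| "sat w v (Exists u f) = (\<exists>p\<in>{1..length w}. sat w (v(u := p)) f)"
| "sat w v (Forall u f) = (\<forall>p\<in>{1..length w}. sat w (v(u := p)) f)"

fun fv :: "'a fo2 \<Rightarrow> var set" where
  "fv FTrue = {}"
| "fv (Less u u') = {u, u'}"
| "fv (Equal u u') = {u, u'}"
| "fv (Letter a u) = {u}"
| "fv (Neg f) = fv f"
| "fv (Conj f g) = fv f \<union> fv g"
| "fv (Disj f g) = fv f \<union> fv g"
| "fv (Exists u f) = fv f - {u}"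
| "fv (Forall u f) = fv f - {u}"

fun qdepth :: "'a fo2 \<Rightarrow> nat" where
  "qdepth FTrue = 0"
| "qdepth (Less u u') = 0"
| "qdepth (Equal u u') = 0"
| "qdepth (Letter a u) = 0"
| "qdepth (Neg f) = qdepth f"
| "qdepth (Conj f g) = max (qdepth f) (qdepth g)"
| "qdepth (Disj f g) = max (qdepth f) (qdepth g)"
| "qdepth (Exists u f) = Suc (qdepth f)"
| "qdepth (Forall u f) = Suc (qdepth f)"

text \<open>\<open>(w,i) \<Turnstile> \<phi>\<close>: x interpreted as i (y is irrelevant for formulas with free variables in {x}).\<close>
definition satx :: "'a list \<Rightarrow> nat \<Rightarrow> 'a fo2 \<Rightarrow> bool" where
  "satx w i f = sat w (\<lambda>_. i) f"

definition unique_position :: "'a fo2 \<Rightarrow> bool" where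
  "unique_position f \<longleftrightarrow> fv f \<subseteq> {X} \<and>
     (\<forall>w. \<forall>i\<in>{1..length w}. \<forall>j\<in>{1..length w}. satx w i f \<and> satx w j f \<longrightarrow> i = j)"

datatype 'a bpos = First 'a | Last 'a

definition opt_min :: "nat set \<Rightarrow> nat option" where
  "opt_min S = (if S = {} then None else Some (Min S))"
definition opt_max :: "nat set \<Rightarrow> nat option" where
  "opt_max S = (if S = {} then None else Some (Max S))"

fun bpos_init :: "'a list \<Rightarrow> 'a bpos \<Rightarrow> nat option" where
  "bpos_init w (First a) = opt_min {i\<in>{1..length w}. w ! (i - 1) = a}"
| "bpos_init w (Last a) = opt_max {i\<in>{1..length w}. w ! (i - 1) = a}"

fun bpos_step :: "'a list \<Rightarrow> 'a bpos \<Rightarrow> nat \<Rightarrow> nat option" where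
  "bpos_step w (First a) q = opt_min {i\<in>{q+1..length w}. w ! (i - 1) = a}"
| "bpos_step w (Last a) q = opt_max {i\<in>{1..q-1}. w ! (i - 1) = a}"

fun ranker_from :: "'a list \<Rightarrow> nat \<Rightarrow> 'a bpos list \<Rightarrow> nat option" where
  "ranker_from w q [] = Some q"
| "ranker_from w q (p # ps) = Option.bind (bpos_step w p q) (\<lambda>q'. ranker_from w q' ps)"

fun ranker_eval :: "'a list \<Rightarrow> 'a bpos list \<Rightarrow> nat option" where
  "ranker_eval w [] = None"
| "ranker_eval w (p # ps) = Option.bind (bpos_init w p) (\<lambda>q. ranker_from w q ps)"

definition rankers_upto :: "nat \<Rightarrow> 'a bpos list set" where
  "rankers_upto n = {r. 1 \<le> length r \<and> length r \<le> n}"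

end

theory Submission
  imports Defs
begin


definition sameord :: "nat \<Rightarrow> nat \<Rightarrow> nat \<Rightarrow> nat \<Rightarrow> bool" where
  "sameord i j i' j' \<longleftrightarrow> (i < j \<longleftrightarrow> i' < j') \<and> (i = j \<longleftrightarrow> i' = j')"

lemma sameord_sym: "sameord i j i' j' \<Longrightarrow> sameord j i j' i'"
  unfolding sameord_def by auto

lemma sameord_swap: "sameord i j i' j' \<Longrightarrow> sameord i' j' i j"
  unfolding sameord_def by auto

fun G :: "nat \<Rightarrow> 'a list \<Rightarrow> nat \<Rightarrow> 'a list \<Rightarrow> nat \<Rightarrow> bool" where
  "G 0 w i w' i' = (i \<in> {1..length w} \<and> i' \<in> {1..length w'} \<and> w!(i-1) = w'!(i'-1))"
| "G (Suc m) w i w' i' = (G 0 w i w' i' \<and>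
     (\<forall>j\<in>{1..length w}. \<exists>j'\<in>{1..length w'}. sameord i j i' j' \<and> G m w j w' j') \<and>
     (\<forall>j'\<in>{1..length w'}. \<exists>j\<in>{1..length w}. sameord i j i' j' \<and> G m w j w' j'))"

lemma G_mono: "G (Suc m) w i w' i' \<Longrightarrow> G m w i w' i'"
proof (induction m arbitrary: i i')
  case 0
  then show ?case by simp
next
  case (Suc m)
  have h: "G (Suc (Suc m)) w i w' i'" by fact
  have a: "G 0 w i w' i'" using h by simp
  have b: "\<forall>j\<in>{1..length w}. \<exists>j'\<in>{1..length w'}. sameord i j i' j' \<and> G m w j w' j'"
  proof
    fix j assume j: "j \<in> {1..length w}"
    obtain j' where "j' \<in> {1..length w'}" "sameord i j i' j'" "G (Suc m) w j w' j'"
      using h j by (simp only: G.simps) blast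
    then show "\<exists>j'\<in>{1..length w'}. sameord i j i' j' \<and> G m w j w' j'" using Suc.IH by blast
  qed
  have c: "\<forall>j'\<in>{1..length w'}. \<exists>j\<in>{1..length w}. sameord i j i' j' \<and> G m w j w' j'"
  proof
    fix j' assume j: "j' \<in> {1..length w'}"
    obtain j where "j \<in> {1..length w}" "sameord i j i' j'" "G (Suc m) w j w' j'"
      using h j by (simp only: G.simps) blast
    then show "\<exists>j\<in>{1..length w}. sameord i j i' j' \<and> G m w j w' j'" using Suc.IH by blast
  qed
  show ?case using a b c by (simp only: G.simps)
qed

lemma G_le_aux: "G (m + d) w i w' i' \<Longrightarrow> G m w i w' i'"
proof (induction d)
  case 0 then show ?case by simp
next
  case (Suc d) then show ?case by (metis G_mono add_Suc_right)
qed

lemma G_le': "G m' w i w' i' \<Longrightarrow> m \<le> m' \<Longrightarrow> G m w i w' i'"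
  using G_le_aux[of m "m' - m"] by auto

lemma G_forth: "G (Suc m) w i w' i' \<Longrightarrow> j \<in> {1..length w} \<Longrightarrow>
  \<exists>j'\<in>{1..length w'}. sameord i j i' j' \<and> G m w j w' j'"
proof -
  assume a: "G (Suc m) w i w' i'" and j: "j \<in> {1..length w}"
  have "\<forall>j\<in>{1..length w}. \<exists>j'\<in>{1..length w'}. sameord i j i' j' \<and> G m w j w' j'"
    using a[unfolded G.simps(2)] by (rule conjunct1[OF conjunct2])
  then show ?thesis using j by (rule bspec)
qed

lemma G_back: "G (Suc m) w i w' i' \<Longrightarrow> j' \<in> {1..length w'} \<Longrightarrow>
  \<exists>j\<in>{1..length w}. sameord i j i' j' \<and> G m w j w' j'"
proof -
  assume a: "G (Suc m) w i w' i'" and j: "j' \<in> {1..length w'}"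
  have "\<forall>j'\<in>{1..length w'}. \<exists>j\<in>{1..length w}. sameord i j i' j' \<and> G m w j w' j'"
    using a[unfolded G.simps(2)] by (rule conjunct2[OF conjunct2])
  then show ?thesis using j by (rule bspec)
qed

declare G.simps(2)[simp del]

lemma step_Exists_X:
  assumes IH: "\<And>v v'. G m0 w (v X) w' (v' X) \<Longrightarrow> G m0 w (v Y) w' (v' Y) \<Longrightarrow>
     sameord (v X) (v Y) (v' X) (v' Y) \<Longrightarrow> sat w v f = sat w' v' f"
  and GX0: "G (Suc m0) w (v X) w' (v' X)" and GY0: "G (Suc m0) w (v Y) w' (v' Y)"
  and so: "sameord (v X) (v Y) (v' X) (v' Y)"
  shows "sat w v (Exists X f) = sat w' v' (Exists X f)"
proof -
  have GX: "G m0 w (v X) w' (v' X)" and GY: "G m0 w (v Y) w' (v' Y)"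
    using GX0 GY0 G_mono by blast+
  have 1: "sat w (v(X:=p)) f = sat w' (v'(X:=p')) f"
    if "sameord (v Y) p (v' Y) p'" "G m0 w p w' p'" for p p'
    by (rule IH) (use that GY in \<open>auto intro: sameord_sym\<close>)
  show ?thesis
  proof
    assume "sat w v (Exists X f)"
    then obtain p where p: "p \<in> {1..length w}" "sat w (v(X:=p)) f" by auto
    obtain p' where A: "p' \<in> {1..length w'}" and B: "sameord (v Y) p (v' Y) p'" "G m0 w p w' p'"
      using G_forth[OF GY0 p(1)] by blast
    have "sat w' (v'(X:=p')) f" using 1[OF B] p(2) by simp
    then show "sat w' v' (Exists X f)" using A by auto
  next
    assume "sat w' v' (Exists X f)"
    then obtain p' where p: "p' \<in> {1..length w'}" "sat w' (v'(X:=p')) f" by auto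
    obtain p where A: "p \<in> {1..length w}" and B: "sameord (v Y) p (v' Y) p'" "G m0 w p w' p'"
      using G_back[OF GY0 p(1)] by blast
    have "sat w (v(X:=p)) f" using 1[OF B] p(2) by simp
    then show "sat w v (Exists X f)" using A by auto
  qed
qed

lemma step_Exists_Y:
  assumes IH: "\<And>v v'. G m0 w (v X) w' (v' X) \<Longrightarrow> G m0 w (v Y) w' (v' Y) \<Longrightarrow>
     sameord (v X) (v Y) (v' X) (v' Y) \<Longrightarrow> sat w v f = sat w' v' f"
  and GX0: "G (Suc m0) w (v X) w' (v' X)" and GY0: "G (Suc m0) w (v Y) w' (v' Y)"
  and so: "sameord (v X) (v Y) (v' X) (v' Y)"
  shows "sat w v (Exists Y f) = sat w' v' (Exists Y f)"
proof -
  have GX: "G m0 w (v X) w' (v' X)" and GY: "G m0 w (v Y) w' (v' Y)"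
    using GX0 GY0 G_mono by blast+
  have 1: "sat w (v(Y:=p)) f = sat w' (v'(Y:=p')) f"
    if "sameord (v X) p (v' X) p'" "G m0 w p w' p'" for p p'
    by (rule IH) (use that GX in \<open>auto intro: sameord_sym\<close>)
  show ?thesis
  proof
    assume "sat w v (Exists Y f)"
    then obtain p where p: "p \<in> {1..length w}" "sat w (v(Y:=p)) f" by auto
    obtain p' where A: "p' \<in> {1..length w'}" and B: "sameord (v X) p (v' X) p'" "G m0 w p w' p'"
      using G_forth[OF GX0 p(1)] by blast
    have "sat w' (v'(Y:=p')) f" using 1[OF B] p(2) by simp
    then show "sat w' v' (Exists Y f)" using A by auto
  next
    assume "sat w' v' (Exists Y f)"
    then obtain p' where p: "p' \<in> {1..length w'}" "sat w' (v'(Y:=p')) f" by auto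
    obtain p where A: "p \<in> {1..length w}" and B: "sameord (v X) p (v' X) p'" "G m0 w p w' p'"
      using G_back[OF GX0 p(1)] by blast
    have "sat w (v(Y:=p)) f" using 1[OF B] p(2) by simp
    then show "sat w v (Exists Y f)" using A by auto
  qed
qed

lemma step_Forall_X:
  assumes IH: "\<And>v v'. G m0 w (v X) w' (v' X) \<Longrightarrow> G m0 w (v Y) w' (v' Y) \<Longrightarrow>
     sameord (v X) (v Y) (v' X) (v' Y) \<Longrightarrow> sat w v f = sat w' v' f"
  and GX0: "G (Suc m0) w (v X) w' (v' X)" and GY0: "G (Suc m0) w (v Y) w' (v' Y)"
  and so: "sameord (v X) (v Y) (v' X) (v' Y)"
  shows "sat w v (Forall X f) = sat w' v' (Forall X f)"
proof -
  have GX: "G m0 w (v X) w' (v' X)" and GY: "G m0 w (v Y) w' (v' Y)"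
    using GX0 GY0 G_mono by blast+
  have 1: "sat w (v(X:=p)) f = sat w' (v'(X:=p')) f"
    if "sameord (v Y) p (v' Y) p'" "G m0 w p w' p'" for p p'
    by (rule IH) (use that GY in \<open>auto intro: sameord_sym\<close>)
  show ?thesis
  proof
    assume a: "sat w v (Forall X f)"
    show "sat w' v' (Forall X f)" unfolding sat.simps
    proof
      fix p' assume p: "p' \<in> {1..length w'}"
      obtain p where A: "p \<in> {1..length w}" and B: "sameord (v Y) p (v' Y) p'" "G m0 w p w' p'"
        using G_back[OF GY0 p] by blast
      have "sat w (v(X:=p)) f" using a A by auto
      then show "sat w' (v'(X:=p')) f" using 1[OF B] by simp
    qed
  next
    assume a: "sat w' v' (Forall X f)"
    show "sat w v (Forall X f)" unfolding sat.simps
    proof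
      fix p assume p: "p \<in> {1..length w}"
      obtain p' where A: "p' \<in> {1..length w'}" and B: "sameord (v Y) p (v' Y) p'" "G m0 w p w' p'"
        using G_forth[OF GY0 p] by blast
      have "sat w' (v'(X:=p')) f" using a A by auto
      then show "sat w (v(X:=p)) f" using 1[OF B] by simp
    qed
  qed
qed

lemma step_Forall_Y:
  assumes IH: "\<And>v v'. G m0 w (v X) w' (v' X) \<Longrightarrow> G m0 w (v Y) w' (v' Y) \<Longrightarrow>
     sameord (v X) (v Y) (v' X) (v' Y) \<Longrightarrow> sat w v f = sat w' v' f"
  and GX0: "G (Suc m0) w (v X) w' (v' X)" and GY0: "G (Suc m0) w (v Y) w' (v' Y)"
  and so: "sameord (v X) (v Y) (v' X) (v' Y)"
  shows "sat w v (Forall Y f) = sat w' v' (Forall Y f)"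
proof -
  have GX: "G m0 w (v X) w' (v' X)" and GY: "G m0 w (v Y) w' (v' Y)"
    using GX0 GY0 G_mono by blast+
  have 1: "sat w (v(Y:=p)) f = sat w' (v'(Y:=p')) f"
    if "sameord (v X) p (v' X) p'" "G m0 w p w' p'" for p p'
    by (rule IH) (use that GX in \<open>auto intro: sameord_sym\<close>)
  show ?thesis
  proof
    assume a: "sat w v (Forall Y f)"
    show "sat w' v' (Forall Y f)" unfolding sat.simps
    proof
      fix p' assume p: "p' \<in> {1..length w'}"
      obtain p where A: "p \<in> {1..length w}" and B: "sameord (v X) p (v' X) p'" "G m0 w p w' p'"
        using G_back[OF GX0 p] by blast
      have "sat w (v(Y:=p)) f" using a A by auto
      then show "sat w' (v'(Y:=p')) f" using 1[OF B] by simp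
    qed
  next
    assume a: "sat w' v' (Forall Y f)"
    show "sat w v (Forall Y f)" unfolding sat.simps
    proof
      fix p assume p: "p \<in> {1..length w}"
      obtain p' where A: "p' \<in> {1..length w'}" and B: "sameord (v X) p (v' X) p'" "G m0 w p w' p'"
        using G_forth[OF GX0 p] by blast
      have "sat w' (v'(Y:=p')) f" using a A by auto
      then show "sat w (v(Y:=p)) f" using 1[OF B] by simp
    qed
  qed
qed

lemma G_sound:
  "qdepth f \<le> m \<Longrightarrow> G m w (v X) w' (v' X) \<Longrightarrow> G m w (v Y) w' (v' Y) \<Longrightarrow>
   sameord (v X) (v Y) (v' X) (v' Y) \<Longrightarrow> sat w v f = sat w' v' f"
proof (induction f arbitrary: m v v')
  case (Less u u')
  show ?case using Less.prems(4) by (cases u; cases u') (auto simp: sameord_def)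
next
  case (Equal u u')
  show ?case using Equal.prems(4) by (cases u; cases u'; simp add: sameord_def; metis)
next
  case (Letter a u)
  have "G 0 w (v X) w' (v' X)" by (rule G_le'[OF Letter.prems(2) le0])
  moreover have "G 0 w (v Y) w' (v' Y)" by (rule G_le'[OF Letter.prems(3) le0])
  ultimately show ?case by (cases u) auto
next
  case (Neg f) show ?case using Neg.IH[OF _ Neg.prems(2-4)] Neg.prems(1) by simp
next
  case (Conj f g)
  have "sat w v f = sat w' v' f" by (rule Conj.IH(1)) (use Conj.prems in simp_all)
  moreover have "sat w v g = sat w' v' g" by (rule Conj.IH(2)) (use Conj.prems in simp_all)
  ultimately show ?case by simp
next
  case (Disj f g)
  have "sat w v f = sat w' v' f" by (rule Disj.IH(1)) (use Disj.prems in simp_all)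
  moreover have "sat w v g = sat w' v' g" by (rule Disj.IH(2)) (use Disj.prems in simp_all)
  ultimately show ?case by simp
next
  case FTrue then show ?case by simp
next
  case (Exists u f)
  from Exists.prems(1) obtain m0 where m: "m = Suc m0" and d: "qdepth f \<le> m0"
    by (cases m) simp_all
  note IH = Exists.IH[OF d]
  have P: "G (Suc m0) w (v X) w' (v' X)" "G (Suc m0) w (v Y) w' (v' Y)"
    "sameord (v X) (v Y) (v' X) (v' Y)" using Exists.prems(2-4) unfolding m by auto
  show ?case
  proof (cases u)
    case X then show ?thesis using step_Exists_X[OF IH P] by simp
  next
    case Y then show ?thesis using step_Exists_Y[OF IH P] by simp
  qed
next
  case (Forall u f)
  from Forall.prems(1) obtain m0 where m: "m = Suc m0" and d: "qdepth f \<le> m0"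
    by (cases m) simp_all
  note IH = Forall.IH[OF d]
  have P: "G (Suc m0) w (v X) w' (v' X)" "G (Suc m0) w (v Y) w' (v' Y)"
    "sameord (v X) (v Y) (v' X) (v' Y)" using Forall.prems(2-4) unfolding m by auto
  show ?case
  proof (cases u)
    case X then show ?thesis using step_Forall_X[OF IH P] by simp
  next
    case Y then show ?thesis using step_Forall_Y[OF IH P] by simp
  qed
qed

lemma G_satx: "G m w i w' i' \<Longrightarrow> qdepth f \<le> m \<Longrightarrow> satx w i f = satx w' i' f"
  unfolding satx_def by (rule G_sound) (auto simp: sameord_def)



lemma opt_min_Some_iff: "finite S \<Longrightarrow> opt_min S = Some t \<longleftrightarrow> t \<in> S \<and> (\<forall>s\<in>S. t \<le> s)"
  unfolding opt_min_def
  by (auto intro: Min_eqI Min_in)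

lemma opt_min_None: "opt_min S = None \<longleftrightarrow> S = {}"
  unfolding opt_min_def by auto

lemma opt_max_Some_iff: "finite S \<Longrightarrow> opt_max S = Some t \<longleftrightarrow> t \<in> S \<and> (\<forall>s\<in>S. s \<le> t)"
  unfolding opt_max_def
  by (auto intro: Max_eqI Max_in)

lemma opt_max_None: "opt_max S = None \<longleftrightarrow> S = {}"
  unfolding opt_max_def by auto

fun blet :: "'a bpos \<Rightarrow> 'a" where
  "blet (First a) = a" | "blet (Last a) = a"

lemma step_range:
  assumes "q \<le> Suc (length w)" "bpos_step w b q = Some t"
  shows "t \<in> {1..length w} \<and> w!(t-1) = blet b"
proof (cases b)
  case (First a)
  have "t \<in> {i\<in>{q+1..length w}. w ! (i - 1) = a}"
    using assms(2) First opt_min_Some_iff[of "{i\<in>{q+1..length w}. w ! (i - 1) = a}"] by auto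
  then show ?thesis using First by auto
next
  case (Last a)
  have "t \<in> {i\<in>{1..q-1}. w ! (i - 1) = a}"
    using assms(2) Last opt_max_Some_iff[of "{i\<in>{1..q-1}. w ! (i - 1) = a}"] by auto
  then show ?thesis using Last assms(1) by auto
qed

lemma ranker_from_range:
  "q \<le> Suc (length w) \<Longrightarrow> ranker_from w q rs = Some t \<Longrightarrow> rs \<noteq> [] \<Longrightarrow>
   t \<in> {1..length w} \<and> w!(t-1) = blet (last rs)"
proof (induction rs arbitrary: q)
  case Nil then show ?case by simp
next
  case (Cons b rs)
  from Cons.prems(2) obtain q1 where q1: "bpos_step w b q = Some q1" "ranker_from w q1 rs = Some t"
    by (auto split: Option.bind_splits)
  have r1: "q1 \<in> {1..length w} \<and> w!(q1-1) = blet b" using step_range[OF Cons.prems(1) q1(1)] .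
  show ?case
  proof (cases "rs = []")
    case True then show ?thesis using q1 r1 by simp
  next
    case False
    have "q1 \<le> Suc (length w)" using r1 by auto
    then show ?thesis using Cons.IH[OF _ q1(2) False] False by simp
  qed
qed

definition st :: "'a list \<Rightarrow> 'a bpos \<Rightarrow> nat" where
  "st w b = (case b of First _ \<Rightarrow> 0 | Last _ \<Rightarrow> Suc (length w))"

lemma bpos_init_st: "bpos_init w b = bpos_step w b (st w b)"
  by (cases b) (simp_all add: st_def)

lemma st_le: "st w b \<le> Suc (length w)"
  by (cases b) (simp_all add: st_def)

lemma ranker_eval_st: "ranker_eval w (b#rs) = ranker_from w (st w b) (b#rs)"
  by (simp add: bpos_init_st)

lemma ranker_eval_range:
  assumes that: "ranker_eval w r = Some t"
  shows "t \<in> {1..length w} \<and> w!(t-1) = blet (last r)"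
proof (cases r)
  case Nil
  then show ?thesis
    using that by simp
next
  case (Cons b rs)
  have "ranker_from w (st w b) (b # rs) = Some t" using that Cons ranker_eval_st[of w b rs] by simp
  from ranker_from_range[OF st_le this] show ?thesis using Cons by simp
qed

lemma ranker_from_append:
  "ranker_from w q (rs @ [b]) = Option.bind (ranker_from w q rs) (bpos_step w b)"
  by (induction rs arbitrary: q) (auto split: Option.bind_splits option.splits)

lemma ranker_eval_append:
  "r \<noteq> [] \<Longrightarrow> ranker_eval w (r @ [b]) = Option.bind (ranker_eval w r) (bpos_step w b)"
proof (cases r)
  case (Cons c rs)
  have "ranker_eval w (r @ [b]) = ranker_from w (st w c) (r @ [b])"
    using Cons ranker_eval_st[of w c "rs @ [b]"] by simp
  also have "\<dots> = Option.bind (ranker_from w (st w c) r) (bpos_step w b)"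
    by (rule ranker_from_append)
  also have "ranker_from w (st w c) r = ranker_eval w r"
    using Cons ranker_eval_st[of w c rs] by simp
  finally show ?thesis .
qed simp



definition WE :: "nat \<Rightarrow> 'a list \<Rightarrow> 'a list \<Rightarrow> bool" where
  "WE m w w' \<longleftrightarrow> (\<forall>r\<in>rankers_upto m. (ranker_eval w r = None \<longleftrightarrow> ranker_eval w' r = None)) \<and>
    (\<forall>r1\<in>rankers_upto m. \<forall>r2\<in>rankers_upto m. \<forall>t1 t2 t1' t2'.
       ranker_eval w r1 = Some t1 \<longrightarrow> ranker_eval w r2 = Some t2 \<longrightarrow>
       ranker_eval w' r1 = Some t1' \<longrightarrow> ranker_eval w' r2 = Some t2' \<longrightarrow> sameord t1 t2 t1' t2')"

definition S2 :: "nat \<Rightarrow> 'a list \<Rightarrow> nat \<Rightarrow> 'a list \<Rightarrow> nat \<Rightarrow> bool" where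
  "S2 m w x w' x' \<longleftrightarrow> x \<in> {1..length w} \<and> x' \<in> {1..length w'} \<and> w!(x-1) = w'!(x'-1) \<and>
     WE m w w' \<and>
     (\<forall>r\<in>rankers_upto m. \<forall>t t'. ranker_eval w r = Some t \<longrightarrow> ranker_eval w' r = Some t' \<longrightarrow>
        sameord t x t' x')"

lemma rankers_upto_mono: "m \<le> m' \<Longrightarrow> rankers_upto m \<subseteq> rankers_upto m'"
  unfolding rankers_upto_def by auto

lemma WE_mono: "WE m' w w' \<Longrightarrow> m \<le> m' \<Longrightarrow> WE m w w'"
  unfolding WE_def using rankers_upto_mono[of m m'] by blast

lemma S2_mono: "S2 m' w x w' x' \<Longrightarrow> m \<le> m' \<Longrightarrow> S2 m w x w' x'"
  unfolding S2_def using rankers_upto_mono[of m m'] WE_mono[of m' w w' m] by blast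

lemma WE_sym: "WE m w w' \<Longrightarrow> WE m w' w"
  unfolding WE_def by (meson sameord_swap)

lemma S2_sym: "S2 m w x w' x' \<Longrightarrow> S2 m w' x' w x"
  unfolding S2_def using WE_sym[of m w w'] by (metis sameord_swap)

lemma S2_forth:
  assumes S: "S2 (Suc m) w x w' x'" and j: "j \<in> {1..length w}"
  shows "\<exists>j'\<in>{1..length w'}. sameord x j x' j' \<and> S2 m w j w' j'"
proof -
  have xr: "x \<in> {1..length w}" "x' \<in> {1..length w'}" and WE: "WE (Suc m) w w'"
    and XR: "\<And>r t t'. r\<in>rankers_upto (Suc m) \<Longrightarrow> ranker_eval w r = Some t \<Longrightarrow>
         ranker_eval w' r = Some t' \<Longrightarrow> sameord t x t' x'"
    using S unfolding S2_def by blast+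
  have DEF: "\<And>r. r\<in>rankers_upto (Suc m) \<Longrightarrow> (ranker_eval w r = None) = (ranker_eval w' r = None)"
    and PAIR: "\<And>r1 r2 t1 t2 t1' t2'. r1\<in>rankers_upto (Suc m) \<Longrightarrow> r2\<in>rankers_upto (Suc m) \<Longrightarrow>
       ranker_eval w r1 = Some t1 \<Longrightarrow> ranker_eval w r2 = Some t2 \<Longrightarrow>
       ranker_eval w' r1 = Some t1' \<Longrightarrow> ranker_eval w' r2 = Some t2' \<Longrightarrow> sameord t1 t2 t1' t2'"
    using WE unfolding WE_def by blast+
  have WEm: "WE m w w'" using WE_mono[OF WE] by simp
  have Rsub: "rankers_upto m \<subseteq> rankers_upto (Suc m)" by (rule rankers_upto_mono) simp
  have other: "\<exists>t'. ranker_eval w' r = Some t'" if "r \<in> rankers_upto (Suc m)" "ranker_eval w r = Some t" for r t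
    using DEF[OF that(1)] that(2) by (cases "ranker_eval w' r") auto
  show ?thesis
  proof (cases "\<exists>r\<in>rankers_upto m. ranker_eval w r = Some j")
    case True
    then obtain r where r: "r \<in> rankers_upto m" "ranker_eval w r = Some j" by blast
    have rS: "r \<in> rankers_upto (Suc m)" using r Rsub by blast
    obtain t' where t': "ranker_eval w' r = Some t'" using other[OF rS r(2)] by blast
    have rng: "t' \<in> {1..length w'}" "w'!(t'-1) = blet (last r)" using ranker_eval_range[OF t'] by auto
    have lj: "w!(j-1) = blet (last r)" using ranker_eval_range[OF r(2)] by auto
    have "sameord j x t' x'" using XR[OF rS r(2) t'] .
    then have so: "sameord x j x' t'" by (rule sameord_sym)
    have "S2 m w j w' t'"
      unfolding S2_def
    proof (intro conjI ballI allI impI)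
      show "j \<in> {1..length w}" by fact
      show "t' \<in> {1..length w'}" by fact
      show "w ! (j - 1) = w' ! (t' - 1)" using rng lj by simp
      show "WE m w w'" by fact
      fix r2 t2 t2' assume "r2 \<in> rankers_upto m" "ranker_eval w r2 = Some t2" "ranker_eval w' r2 = Some t2'"
      then show "sameord t2 j t2' t'" using PAIR[OF _ rS _ r(2) _ t'] Rsub by blast
    qed
    then show ?thesis using so rng(1) by blast
  next
    case False
    define c where "c = w!(j-1)"
    consider "j = x" | "x < j" | "j < x" by arith
    then show ?thesis
    proof cases
      case 1
      have "S2 m w x w' x'" using S2_mono[OF S] by simp
      moreover have "sameord x x x' x'" by (simp add: sameord_def)
      ultimately show ?thesis using 1 xr by blast
    next
      case 2
      define H where "H = {t. \<exists>r\<in>rankers_upto m. ranker_eval w r = Some t \<and> j < t}"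
      have Hsub: "H \<subseteq> {1..length w}" unfolding H_def using ranker_eval_range by blast
      have finH: "finite H" using Hsub finite_subset by blast
      obtain rz z where rz: "rz \<in> rankers_upto (Suc m)" "ranker_eval w rz = Some z" "last rz = Last c"
        "j \<le> z" and zH: "\<forall>t\<in>H. z < t"
      proof (cases "H = {}")
        case True
        define T where "T = {i\<in>{1..length w}. w ! (i - 1) = c}"
        have jT: "j \<in> T" using j unfolding T_def c_def by simp
        have fT: "finite T" unfolding T_def by simp
        have e: "ranker_eval w [Last c] = Some (Max T)"
          using jT unfolding T_def by (auto simp: opt_max_def)
        have "j \<le> Max T" using jT fT by simp
        moreover have "[Last c] \<in> rankers_upto (Suc m)" unfolding rankers_upto_def by simp
        ultimately show ?thesis using that e True by fastforce
      next
        case False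
        define t2 where "t2 = Min H"
        have t2H: "t2 \<in> H" unfolding t2_def using finH False by simp
        then obtain r2 where r2: "r2 \<in> rankers_upto m" "ranker_eval w r2 = Some t2" "j < t2"
          unfolding H_def by blast
        have r2ne: "r2 \<noteq> []" using r2(1) unfolding rankers_upto_def by auto
        define T where "T = {i\<in>{1..t2-1}. w ! (i - 1) = c}"
        have jT: "j \<in> T" using j r2(3) unfolding T_def c_def by simp
        have fT: "finite T" unfolding T_def by simp
        have e: "ranker_eval w (r2 @ [Last c]) = Some (Max T)"
          using jT r2(2) ranker_eval_append[OF r2ne] unfolding T_def by (auto simp: opt_max_def)
        have "j \<le> Max T" using jT fT by simp
        moreover have "r2 @ [Last c] \<in> rankers_upto (Suc m)" using r2(1) unfolding rankers_upto_def by simp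
        moreover have "\<forall>t\<in>H. Max T < t"
        proof
          fix t assume "t \<in> H"
          then have "t2 \<le> t" unfolding t2_def using finH by simp
          moreover have "Max T \<in> T" using jT fT Max_in by blast
          then have "Max T < t2" unfolding T_def by auto
          ultimately show "Max T < t" by simp
        qed
        ultimately show ?thesis using that e by fastforce
      qed
      obtain z' where z': "ranker_eval w' rz = Some z'" using other[OF rz(1,2)] by blast
      have zr: "z' \<in> {1..length w'}" "w'!(z'-1) = c" using ranker_eval_range[OF z'] rz(3) by auto
      have "sameord z x z' x'" using XR[OF rz(1,2) z'] .
      then have xz: "x' < z'" using 2 rz(4) unfolding sameord_def by auto
      have so: "sameord x j x' z'" using 2 xz unfolding sameord_def by auto
      have "S2 m w j w' z'"
        unfolding S2_def
      proof (intro conjI ballI allI impI)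
        show "j \<in> {1..length w}" by fact
        show "z' \<in> {1..length w'}" by fact
        show "w ! (j - 1) = w' ! (z' - 1)" using zr c_def by simp
        show "WE m w w'" by fact
        fix r t t' assume r: "r \<in> rankers_upto m" "ranker_eval w r = Some t" "ranker_eval w' r = Some t'"
        have rS: "r \<in> rankers_upto (Suc m)" using r Rsub by blast
        have tz: "sameord t z t' z'" using PAIR[OF rS rz(1) r(2) rz(2) r(3) z'] .
        have "t \<noteq> j" using False r by blast
        then consider "t < j" | "j < t" by arith
        then show "sameord t j t' z'"
        proof cases
          case 1 then show ?thesis using tz rz(4) unfolding sameord_def by auto
        next
          case 2
          then have "t \<in> H" unfolding H_def using r by blast
          then have "z < t" using zH by blast
          then show ?thesis using tz 2 unfolding sameord_def by auto
        qed
      qed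
      then show ?thesis using so zr(1) by blast
    next
      case 3
      define H where "H = {t. \<exists>r\<in>rankers_upto m. ranker_eval w r = Some t \<and> t < j}"
      have Hsub: "H \<subseteq> {1..length w}" unfolding H_def using ranker_eval_range by blast
      have finH: "finite H" using Hsub finite_subset by blast
      obtain rz z where rz: "rz \<in> rankers_upto (Suc m)" "ranker_eval w rz = Some z" "last rz = First c"
        "z \<le> j" and zH: "\<forall>t\<in>H. t < z"
      proof (cases "H = {}")
        case True
        define T where "T = {i\<in>{1..length w}. w ! (i - 1) = c}"
        have jT: "j \<in> T" using j unfolding T_def c_def by simp
        have fT: "finite T" unfolding T_def by simp
        have e: "ranker_eval w [First c] = Some (Min T)"
          using jT unfolding T_def by (auto simp: opt_min_def)
        have "Min T \<le> j" using jT fT by simp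
        moreover have "[First c] \<in> rankers_upto (Suc m)" unfolding rankers_upto_def by simp
        ultimately show ?thesis using that e True by fastforce
      next
        case False
        define t2 where "t2 = Max H"
        have t2H: "t2 \<in> H" unfolding t2_def using finH False by simp
        then obtain r2 where r2: "r2 \<in> rankers_upto m" "ranker_eval w r2 = Some t2" "t2 < j"
          unfolding H_def by blast
        have r2ne: "r2 \<noteq> []" using r2(1) unfolding rankers_upto_def by auto
        define T where "T = {i\<in>{t2+1..length w}. w ! (i - 1) = c}"
        have jT: "j \<in> T" using j r2(3) unfolding T_def c_def by simp
        have fT: "finite T" unfolding T_def by simp
        have e: "ranker_eval w (r2 @ [First c]) = Some (Min T)"
          using jT r2(2) ranker_eval_append[OF r2ne] unfolding T_def by (auto simp: opt_min_def)
        have "Min T \<le> j" using jT fT by simp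
        moreover have "r2 @ [First c] \<in> rankers_upto (Suc m)" using r2(1) unfolding rankers_upto_def by simp
        moreover have "\<forall>t\<in>H. t < Min T"
        proof
          fix t assume "t \<in> H"
          then have "t \<le> t2" unfolding t2_def using finH by simp
          moreover have "Min T \<in> T" using jT fT Min_in by blast
          then have "t2 < Min T" unfolding T_def by auto
          ultimately show "t < Min T" by simp
        qed
        ultimately show ?thesis using that e by fastforce
      qed
      obtain z' where z': "ranker_eval w' rz = Some z'" using other[OF rz(1,2)] by blast
      have zr: "z' \<in> {1..length w'}" "w'!(z'-1) = c" using ranker_eval_range[OF z'] rz(3) by auto
      have "sameord z x z' x'" using XR[OF rz(1,2) z'] .
      then have xz: "z' < x'" using 3 rz(4) unfolding sameord_def by auto
      have so: "sameord x j x' z'" using 3 xz unfolding sameord_def by auto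
      have "S2 m w j w' z'"
        unfolding S2_def
      proof (intro conjI ballI allI impI)
        show "j \<in> {1..length w}" by fact
        show "z' \<in> {1..length w'}" by fact
        show "w ! (j - 1) = w' ! (z' - 1)" using zr c_def by simp
        show "WE m w w'" by fact
        fix r t t' assume r: "r \<in> rankers_upto m" "ranker_eval w r = Some t" "ranker_eval w' r = Some t'"
        have rS: "r \<in> rankers_upto (Suc m)" using r Rsub by blast
        have tz: "sameord t z t' z'" using PAIR[OF rS rz(1) r(2) rz(2) r(3) z'] .
        have "t \<noteq> j" using False r by blast
        then consider "j < t" | "t < j" by arith
        then show "sameord t j t' z'"
        proof cases
          case 1 then show ?thesis using tz rz(4) unfolding sameord_def by auto
        next
          case 2
          then have "t \<in> H" unfolding H_def using r by blast
          then have "t < z" using zH by blast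
          then show ?thesis using tz 2 unfolding sameord_def by auto
        qed
      qed
      then show ?thesis using so zr(1) by blast
    qed
  qed
qed

lemma S2_G: "S2 m w x w' x' \<Longrightarrow> G m w x w' x'"
proof (induction m arbitrary: x x')
  case 0
  then show ?case unfolding S2_def by simp
next
  case (Suc m)
  have g0: "G 0 w x w' x'" using Suc.prems unfolding S2_def by simp
  have f: "\<forall>j\<in>{1..length w}. \<exists>j'\<in>{1..length w'}. sameord x j x' j' \<and> G m w j w' j'"
    using S2_forth[OF Suc.prems] Suc.IH by blast
  have b: "\<forall>j'\<in>{1..length w'}. \<exists>j\<in>{1..length w}. sameord x j x' j' \<and> G m w j w' j'"
  proof
    fix j' assume j': "j' \<in> {1..length w'}"
    obtain j where "j \<in> {1..length w}" "sameord x' j' x j" "S2 m w' j' w j"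
      using S2_forth[OF S2_sym[OF Suc.prems] j'] by blast
    then show "\<exists>j\<in>{1..length w}. sameord x j x' j' \<and> G m w j w' j'"
      using Suc.IH S2_sym sameord_swap by blast
  qed
  show ?case using g0 f b by (simp add: G.simps(2))
qed



definition dup :: "'a list \<Rightarrow> nat \<Rightarrow> 'a list" where
  "dup w p = take p w @ drop (p-1) w"

definition ee :: "nat \<Rightarrow> nat \<Rightarrow> nat" where
  "ee p q = (if q < p then q else Suc q)"

definition hh :: "nat \<Rightarrow> nat \<Rightarrow> nat" where
  "hh p i = (if i \<le> p then i else i - 1)"

context
  fixes w :: "'a list" and p :: nat
  assumes p: "1 \<le> p" "p \<le> length w"
begin

lemma length_dup: "length (dup w p) = Suc (length w)"
  using p unfolding dup_def by simp

lemma dup_nth: "1 \<le> i \<Longrightarrow> i \<le> Suc (length w) \<Longrightarrow>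
   dup w p ! (i-1) = w ! (hh p i - 1) \<and> hh p i \<in> {1..length w}"
  using p unfolding dup_def hh_def
  by (auto simp: nth_append min_def numeral_2_eq_2)

lemma ee_nth: "q \<in> {1..length w} \<Longrightarrow> dup w p ! (ee p q - 1) = w ! (q - 1)"
proof -
  assume q: "q \<in> {1..length w}"
  have "1 \<le> ee p q" "ee p q \<le> Suc (length w)" using q unfolding ee_def by auto
  moreover have "hh p (ee p q) = q" unfolding hh_def ee_def by auto
  ultimately show ?thesis using dup_nth by metis
qed

lemma step_dup:
  assumes q: "q \<le> Suc (length w)" "q \<noteq> p" and np: "bpos_step w b q \<noteq> Some p"
  shows "bpos_step (dup w p) b (ee p q) = map_option (ee p) (bpos_step w b q)"
proof (cases b)
  case (First c)
  define S where "S = {i\<in>{q+1..length w}. w ! (i - 1) = c}"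
  define S' where "S' = {i\<in>{ee p q+1..length (dup w p)}. dup w p ! (i - 1) = c}"
  have fS: "finite S" "finite S'" unfolding S_def S'_def by auto
  have i1: "ee p i \<in> S'" if "i \<in> S" for i
  proof -
    have "dup w p ! (ee p i - 1) = c" using that ee_nth unfolding S_def by auto
    then show ?thesis using that length_dup unfolding S_def S'_def ee_def by auto
  qed
  have i2: "hh p i \<in> S" if "i \<in> S'" for i
  proof -
    have i: "1 \<le> i" "i \<le> Suc (length w)" "ee p q < i" "dup w p ! (i-1) = c"
      using that length_dup unfolding S'_def by auto
    have "w ! (hh p i - 1) = c" "hh p i \<in> {1..length w}" using dup_nth[OF i(1,2)] i(4) by auto
    moreover have "q < hh p i" using i(3) q(2) unfolding ee_def hh_def by (auto split: if_splits)
    ultimately show ?thesis unfolding S_def by auto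
  qed
  show ?thesis
  proof (cases "S = {}")
    case True
    then have "S' = {}" using i2 by blast
    then show ?thesis using True First unfolding S_def S'_def by (simp add: opt_min_def)
  next
    case False
    define t where "t = Min S"
    have tS: "t \<in> S" and tmin: "\<forall>s\<in>S. t \<le> s" unfolding t_def using fS False by auto
    have bs: "bpos_step w b q = Some t" using First opt_min_Some_iff[OF fS(1)] tS tmin unfolding S_def by simp
    have tp: "t \<noteq> p" using np bs by simp
    have "opt_min S' = Some (ee p t)"
    proof (subst opt_min_Some_iff[OF fS(2)], intro conjI ballI)
      show "ee p t \<in> S'" using i1[OF tS] .
      fix i assume iS: "i \<in> S'"
      have "t \<le> hh p i" using tmin i2[OF iS] by blast
      then show "ee p t \<le> i" using tp unfolding ee_def hh_def by (auto split: if_splits)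
    qed
    then show ?thesis using bs First unfolding S'_def by simp
  qed
next
  case (Last c)
  define S where "S = {i\<in>{1..q-1}. w ! (i - 1) = c}"
  define S' where "S' = {i\<in>{1..ee p q - 1}. dup w p ! (i - 1) = c}"
  have fS: "finite S" "finite S'" unfolding S_def S'_def by auto
  have i1: "ee p i \<in> S'" if "i \<in> S" for i
  proof -
    have "i \<in> {1..length w}" using that q unfolding S_def by auto
    then have "dup w p ! (ee p i - 1) = c" using that ee_nth unfolding S_def by auto
    then show ?thesis using that unfolding S_def S'_def ee_def by auto
  qed
  have i2: "hh p i \<in> S" if "i \<in> S'" for i
  proof -
    have i: "1 \<le> i" "i < ee p q" "dup w p ! (i-1) = c"
      using that unfolding S'_def by auto
    have i3: "i \<le> Suc (length w)" using i(2) q(1) unfolding ee_def by (auto split: if_splits)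
    have "w ! (hh p i - 1) = c" "hh p i \<in> {1..length w}" using dup_nth[OF i(1) i3] i(3) by auto
    moreover have "hh p i < q" using i(2) q(2) unfolding ee_def hh_def by (auto split: if_splits)
    ultimately show ?thesis unfolding S_def by auto
  qed
  show ?thesis
  proof (cases "S = {}")
    case True
    then have "S' = {}" using i2 by blast
    then show ?thesis using True Last unfolding S_def S'_def by (simp add: opt_max_def)
  next
    case False
    define t where "t = Max S"
    have tS: "t \<in> S" and tmax: "\<forall>s\<in>S. s \<le> t" unfolding t_def using fS False by auto
    have bs: "bpos_step w b q = Some t" using Last opt_max_Some_iff[OF fS(1)] tS tmax unfolding S_def by simp
    have tp: "t \<noteq> p" using np bs by simp
    have "opt_max S' = Some (ee p t)"
    proof (subst opt_max_Some_iff[OF fS(2)], intro conjI ballI)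
      show "ee p t \<in> S'" using i1[OF tS] .
      fix i assume iS: "i \<in> S'"
      have "hh p i \<le> t" using tmax i2[OF iS] by blast
      then show "i \<le> ee p t" using tp unfolding ee_def hh_def by (auto split: if_splits)
    qed
    then show ?thesis using bs Last unfolding S'_def by simp
  qed
qed

lemma from_dup:
  "q \<le> Suc (length w) \<Longrightarrow> q \<noteq> p \<Longrightarrow>
   (\<forall>k. 1 \<le> k \<longrightarrow> k \<le> length rs \<longrightarrow> ranker_from w q (take k rs) \<noteq> Some p) \<Longrightarrow>
   ranker_from (dup w p) (ee p q) rs = map_option (ee p) (ranker_from w q rs)"
proof (induction rs arbitrary: q)
  case Nil then show ?case by simp
next
  case (Cons b rs)
  have np: "bpos_step w b q \<noteq> Some p" using Cons.prems(3)[rule_format, of 1] by simp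
  have sd: "bpos_step (dup w p) b (ee p q) = map_option (ee p) (bpos_step w b q)"
    by (rule step_dup[OF Cons.prems(1,2) np])
  show ?case
  proof (cases "bpos_step w b q")
    case None then show ?thesis using sd by simp
  next
    case (Some q1)
    have q1: "q1 \<in> {1..length w}" using step_range[OF Cons.prems(1) Some] by simp
    have q1p: "q1 \<noteq> p" using np Some by simp
    have hyp: "\<forall>k. 1 \<le> k \<longrightarrow> k \<le> length rs \<longrightarrow> ranker_from w q1 (take k rs) \<noteq> Some p"
    proof (intro allI impI)
      fix k assume k: "1 \<le> k" "k \<le> length rs"
      have "ranker_from w q (take (Suc k) (b # rs)) \<noteq> Some p"
        by (rule Cons.prems(3)[rule_format]) (use k in simp_all)
      then show "ranker_from w q1 (take k rs) \<noteq> Some p" using Some by simp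
    qed
    have "ranker_from (dup w p) (ee p q1) rs = map_option (ee p) (ranker_from w q1 rs)"
      using Cons.IH[of q1] q1 q1p hyp by simp
    then show ?thesis using sd Some by simp
  qed
qed

lemma eval_dup:
  assumes NR: "\<forall>r\<in>rankers_upto n. ranker_eval w r \<noteq> Some p" and r: "r \<in> rankers_upto n"
  shows "ranker_eval (dup w p) r = map_option (ee p) (ranker_eval w r)"
proof -
  obtain b rs where br: "r = b # rs" using r unfolding rankers_upto_def by (cases r) auto
  have st1: "st (dup w p) b = ee p (st w b)" "st w b \<noteq> p"
    using p length_dup unfolding st_def ee_def by (auto split: bpos.splits)
  have hyp: "\<forall>k. 1 \<le> k \<longrightarrow> k \<le> length r \<longrightarrow> ranker_from w (st w b) (take k r) \<noteq> Some p"
  proof (intro allI impI)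
    fix k assume k: "1 \<le> k" "k \<le> length r"
    then have tk: "take k r = b # take (k - 1) rs" using br by (cases k) auto
    have "take k r \<in> rankers_upto n" using k r unfolding rankers_upto_def by auto
    then have "ranker_eval w (take k r) \<noteq> Some p" using NR by blast
    then show "ranker_from w (st w b) (take k r) \<noteq> Some p"
      using tk ranker_eval_st by metis
  qed
  have "ranker_eval (dup w p) r = ranker_from (dup w p) (st (dup w p) b) r"
    using br ranker_eval_st by metis
  also have "\<dots> = map_option (ee p) (ranker_from w (st w b) r)"
    unfolding st1(1) by (rule from_dup[OF st_le st1(2) hyp])
  also have "ranker_from w (st w b) r = ranker_eval w r" using br ranker_eval_st by metis
  finally show ?thesis .
qed

lemma S2_dup:
  assumes NR: "\<forall>r\<in>rankers_upto n. ranker_eval w r \<noteq> Some p" and x': "x' = p \<or> x' = Suc p"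
  shows "S2 n w p (dup w p) x'"
  unfolding S2_def WE_def
proof (intro conjI ballI allI impI)
  show "p \<in> {1..length w}" using p by simp
  show "x' \<in> {1..length (dup w p)}" using p x' length_dup by auto
  have "dup w p ! (x' - 1) = w ! (hh p x' - 1)" using dup_nth[of x'] p x' by auto
  then show "w ! (p - 1) = dup w p ! (x' - 1)" using x' unfolding hh_def by auto
  fix r :: "'a bpos list" assume r: "r \<in> rankers_upto n"
  show "(ranker_eval w r = None) = (ranker_eval (dup w p) r = None)"
    using eval_dup[OF NR r] by simp
  fix t t' assume "ranker_eval w r = Some t" "ranker_eval (dup w p) r = Some t'"
  then have "t' = ee p t" "t \<noteq> p" using eval_dup[OF NR r] NR r by auto
  then show "sameord t p t' x'" using x' unfolding sameord_def ee_def by auto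
next
  fix r1 r2 :: "'a bpos list" and t1 t2 t1' t2'
  assume r: "r1 \<in> rankers_upto n" "r2 \<in> rankers_upto n"
    and e: "ranker_eval w r1 = Some t1" "ranker_eval w r2 = Some t2"
      "ranker_eval (dup w p) r1 = Some t1'" "ranker_eval (dup w p) r2 = Some t2'"
  have "t1' = ee p t1" "t2' = ee p t2" using eval_dup[OF NR r(1)] eval_dup[OF NR r(2)] e by auto
  then show "sameord t1 t2 t1' t2'" unfolding sameord_def ee_def by auto
qed

end

lemma K:
  assumes d: "qdepth \<phi> \<le> n" and u: "unique_position \<phi>" and pr: "p \<in> {1..length w}"
    and s: "satx w p \<phi>"
  shows "\<exists>r\<in>rankers_upto n. ranker_eval w r = Some p"
proof (rule ccontr)
  assume "\<not> ?thesis"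
  then have NR: "\<forall>r\<in>rankers_upto n. ranker_eval w r \<noteq> Some p" by blast
  have p: "1 \<le> p" "p \<le> length w" using pr by auto
  have "G n w p (dup w p) p" by (rule S2_G[OF S2_dup[OF p NR]]) simp
  then have 1: "satx (dup w p) p \<phi>" using G_satx d s by blast
  have "G n w p (dup w p) (Suc p)" by (rule S2_G[OF S2_dup[OF p NR]]) simp
  then have 2: "satx (dup w p) (Suc p) \<phi>" using G_satx d s by blast
  have "p \<in> {1..length (dup w p)}" "Suc p \<in> {1..length (dup w p)}" using length_dup[OF p] p by auto
  then have "p = Suc p" using u 1 2 unfolding unique_position_def by blast
  then show False by simp
qed



fun oth :: "var \<Rightarrow> var" where "oth X = Y" | "oth Y = X"

lemma oth_neq[simp]: "oth v \<noteq> v" "v \<noteq> oth v"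
  by (cases v; simp)+

fun gtf :: "bool \<Rightarrow> 'a bpos list \<Rightarrow> var \<Rightarrow> 'a fo2"
and ltf :: "bool \<Rightarrow> 'a bpos list \<Rightarrow> var \<Rightarrow> 'a fo2" where
  "gtf s [] v = (if s then FTrue else Neg FTrue)"
| "gtf s (First a # rr) v = Exists (oth v) (Conj (Less (oth v) v) (Conj (Letter a (oth v)) (gtf s rr (oth v))))"
| "gtf s (Last a # rr) v = Conj (Exists (oth v) (Conj (Less (oth v) v) (Conj (Letter a (oth v)) (ltf s rr (oth v)))))
     (Neg (Exists (oth v) (Conj (Disj (Less v (oth v)) (Equal v (oth v))) (Conj (Letter a (oth v)) (ltf s rr (oth v))))))"
| "ltf s [] v = (if s then Neg FTrue else FTrue)"
| "ltf s (Last a # rr) v = Exists (oth v) (Conj (Less v (oth v)) (Conj (Letter a (oth v)) (ltf s rr (oth v))))"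
| "ltf s (First a # rr) v = Conj (Exists (oth v) (Conj (Less v (oth v)) (Conj (Letter a (oth v)) (gtf s rr (oth v)))))
     (Neg (Exists (oth v) (Conj (Disj (Less (oth v) v) (Equal (oth v) v)) (Conj (Letter a (oth v)) (gtf s rr (oth v))))))"

fun eqf :: "bool \<Rightarrow> 'a bpos list \<Rightarrow> var \<Rightarrow> 'a fo2" where
  "eqf s [] v = Neg FTrue"
| "eqf s (First a # rr) v = Conj (Letter a v) (Conj (gtf s rr v) (Neg (gtf s (First a # rr) v)))"
| "eqf s (Last a # rr) v = Conj (Letter a v) (Conj (ltf s rr v) (Neg (ltf s (Last a # rr) v)))"

lemma fv_gl: "fv (gtf s rr v) \<subseteq> {v} \<and> fv (ltf s rr v) \<subseteq> {v}"
proof (induction rr arbitrary: v)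
  case Nil then show ?case by simp
next
  case (Cons b rr)
  have "fv (gtf s rr (oth v)) \<subseteq> {oth v}" "fv (ltf s rr (oth v)) \<subseteq> {oth v}" using Cons.IH by blast+
  then show ?case by (cases b) auto
qed

lemma qd_gl: "qdepth (gtf s rr v) \<le> length rr \<and> qdepth (ltf s rr v) \<le> length rr"
proof (induction rr arbitrary: v)
  case Nil then show ?case by simp
next
  case (Cons b rr)
  have "qdepth (gtf s rr (oth v)) \<le> length rr" "qdepth (ltf s rr (oth v)) \<le> length rr" using Cons.IH by blast+
  then show ?case by (cases b) auto
qed

lemma fv_eqf: "fv (eqf s rr v) \<subseteq> {v}"
  using fv_gl[of s rr v] fv_gl[of s "tl rr" v] by (cases "(s, rr, v)" rule: eqf.cases) auto

lemma qd_eqf: "qdepth (eqf s rr v) \<le> length rr"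
  using qd_gl[of s rr v] qd_gl[of s "tl rr" v] by (cases "(s, rr, v)" rule: eqf.cases) auto

definition V :: "bool \<Rightarrow> 'a bpos list \<Rightarrow> 'a list \<Rightarrow> nat option" where
  "V s rr w = ranker_from w (if s then 0 else Suc (length w)) (rev rr)"

lemma V_Cons: "V s (b # rr) w = Option.bind (V s rr w) (bpos_step w b)"
  unfolding V_def by (simp add: ranker_from_append)

lemma V_le: "V s rr w = Some t \<Longrightarrow> t \<le> Suc (length w)"
proof (cases "rr = []")
  case True
  then show "V s rr w = Some t \<Longrightarrow> t \<le> Suc (length w)" unfolding V_def by (auto split: if_splits)
next
  case False
  assume a: "V s rr w = Some t"
  have "t \<in> {1..length w} \<and> w!(t-1) = blet (last (rev rr))"
    by (rule ranker_from_range[of "if s then 0 else Suc (length w)"]) (use a False in \<open>auto simp: V_def\<close>)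
  then show ?thesis by simp
qed

lemma min_lt: "finite S \<Longrightarrow> (\<exists>t. opt_min S = Some t \<and> t < x) \<longleftrightarrow> (\<exists>p\<in>S. p < x)"
proof -
  assume f: "finite S"
  show ?thesis
  proof
    assume "\<exists>t. opt_min S = Some t \<and> t < x"
    then obtain t where "opt_min S = Some t" "t < x" by blast
    then show "\<exists>p\<in>S. p < x" using opt_min_Some_iff[OF f] by blast
  next
    assume "\<exists>p\<in>S. p < x"
    then obtain p where p: "p \<in> S" "p < x" by blast
    then have "Min S \<le> p" using f by simp
    then show "\<exists>t. opt_min S = Some t \<and> t < x" using p unfolding opt_min_def by auto
  qed
qed
lemma min_gt: "finite S \<Longrightarrow> (\<exists>t. opt_min S = Some t \<and> x < t) \<longleftrightarrow> (\<exists>p\<in>S. x < p) \<and> \<not>(\<exists>p\<in>S. p < x \<or> p = x)"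
proof -
  assume f: "finite S"
  show ?thesis
  proof
    assume "\<exists>t. opt_min S = Some t \<and> x < t"
    then obtain t where t: "opt_min S = Some t" "x < t" by blast
    have tS: "t \<in> S" and tm: "\<forall>s\<in>S. t \<le> s" using t(1) opt_min_Some_iff[OF f] by blast+
    have "\<not>(\<exists>p\<in>S. p < x \<or> p = x)"
    proof
      assume "\<exists>p\<in>S. p < x \<or> p = x"
      then obtain p where "p \<in> S" "p < x \<or> p = x" by blast
      moreover have "t \<le> p" using tm \<open>p \<in> S\<close> by blast
      ultimately show False using t(2) by linarith
    qed
    then show "(\<exists>p\<in>S. x < p) \<and> \<not>(\<exists>p\<in>S. p < x \<or> p = x)" using tS t(2) by blast
  next
    assume a: "(\<exists>p\<in>S. x < p) \<and> \<not>(\<exists>p\<in>S. p < x \<or> p = x)"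
    then have ne: "S \<noteq> {}" by blast
    have "Min S \<in> S" using f ne by simp
    then have "\<not> (Min S < x \<or> Min S = x)" using a by blast
    then have "x < Min S" by linarith
    then show "\<exists>t. opt_min S = Some t \<and> x < t" using ne unfolding opt_min_def by simp
  qed
qed
lemma max_gt: "finite S \<Longrightarrow> (\<exists>t. opt_max S = Some t \<and> x < t) \<longleftrightarrow> (\<exists>p\<in>S. x < p)"
proof -
  assume f: "finite S"
  show ?thesis
  proof
    assume "\<exists>t. opt_max S = Some t \<and> x < t"
    then obtain t where "opt_max S = Some t" "x < t" by blast
    then show "\<exists>p\<in>S. x < p" using opt_max_Some_iff[OF f] by blast
  next
    assume "\<exists>p\<in>S. x < p"
    then obtain p where p: "p \<in> S" "x < p" by blast
    then have "p \<le> Max S" using f by simp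
    then show "\<exists>t. opt_max S = Some t \<and> x < t" using p unfolding opt_max_def by auto
  qed
qed
lemma max_lt: "finite S \<Longrightarrow> (\<exists>t. opt_max S = Some t \<and> t < x) \<longleftrightarrow> (\<exists>p\<in>S. p < x) \<and> \<not>(\<exists>p\<in>S. x < p \<or> x = p)"
proof -
  assume f: "finite S"
  show ?thesis
  proof
    assume "\<exists>t. opt_max S = Some t \<and> t < x"
    then obtain t where t: "opt_max S = Some t" "t < x" by blast
    have tS: "t \<in> S" and tm: "\<forall>s\<in>S. s \<le> t" using t(1) opt_max_Some_iff[OF f] by blast+
    have "\<not>(\<exists>p\<in>S. x < p \<or> x = p)"
    proof
      assume "\<exists>p\<in>S. x < p \<or> x = p"
      then obtain p where "p \<in> S" "x < p \<or> x = p" by blast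
      moreover have "p \<le> t" using tm \<open>p \<in> S\<close> by blast
      ultimately show False using t(2) by linarith
    qed
    then show "(\<exists>p\<in>S. p < x) \<and> \<not>(\<exists>p\<in>S. x < p \<or> x = p)" using tS t(2) by blast
  next
    assume a: "(\<exists>p\<in>S. p < x) \<and> \<not>(\<exists>p\<in>S. x < p \<or> x = p)"
    then have ne: "S \<noteq> {}" by blast
    have "Max S \<in> S" using f ne by simp
    then have "\<not> (x < Max S \<or> x = Max S)" using a by blast
    then have "Max S < x" by linarith
    then show "\<exists>t. opt_max S = Some t \<and> t < x" using ne unfolding opt_max_def by simp
  qed
qed
lemma min_eq: "finite S \<Longrightarrow> opt_min S = Some x \<longleftrightarrow> x \<in> S \<and> \<not>(\<exists>p\<in>S. p < x)"
  by (auto simp: opt_min_Some_iff not_less)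
lemma max_eq: "finite S \<Longrightarrow> opt_max S = Some x \<longleftrightarrow> x \<in> S \<and> \<not>(\<exists>p\<in>S. x < p)"
  by (auto simp: opt_max_Some_iff not_less)



lemma sem_gl:
  "1 \<le> val v \<Longrightarrow> val v \<le> length w \<Longrightarrow>
   (sat w val (gtf s rr v) \<longleftrightarrow> (\<exists>t. V s rr w = Some t \<and> t < val v)) \<and>
   (sat w val (ltf s rr v) \<longleftrightarrow> (\<exists>t. V s rr w = Some t \<and> val v < t))"
proof (induction rr arbitrary: val v)
  case Nil
  then show ?case by (simp add: V_def)
next
  case (Cons b rr)
  define u where "u = oth v"
  have uv: "u \<noteq> v" "v \<noteq> u" unfolding u_def by simp_all
  have IH: "\<And>p. p \<in> {1..length w} \<Longrightarrow>
     (sat w (val(u:=p)) (gtf s rr u) \<longleftrightarrow> (\<exists>t. V s rr w = Some t \<and> t < p)) \<and>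
     (sat w (val(u:=p)) (ltf s rr u) \<longleftrightarrow> (\<exists>t. V s rr w = Some t \<and> p < t))"
    using Cons.IH by simp
  have IHg: "\<And>p. p \<in> {1..length w} \<Longrightarrow>
     sat w (val(u:=p)) (gtf s rr u) \<longleftrightarrow> (\<exists>t. V s rr w = Some t \<and> t < p)" using IH by blast
  have IHl: "\<And>p. p \<in> {1..length w} \<Longrightarrow>
     sat w (val(u:=p)) (ltf s rr u) \<longleftrightarrow> (\<exists>t. V s rr w = Some t \<and> p < t)" using IH by blast
  show ?case
  proof (cases "V s rr w")
    case None
    then have "\<And>p. p \<in> {1..length w} \<Longrightarrow> \<not> sat w (val(u:=p)) (gtf s rr u)"
      "\<And>p. p \<in> {1..length w} \<Longrightarrow> \<not> sat w (val(u:=p)) (ltf s rr u)" using IHg IHl by auto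
    then show ?thesis using None
      by (cases b) (auto simp: V_Cons u_def[symmetric])
  next
    case (Some t0)
    have t0le: "t0 \<le> Suc (length w)" using V_le[OF Some] .
    show ?thesis
    proof (cases b)
      case (First a)
      define S where "S = {i\<in>{t0+1..length w}. w ! (i - 1) = a}"
      have fS: "finite S" unfolding S_def by simp
      have VS: "V s (b # rr) w = opt_min S" using Some First unfolding S_def by (simp add: V_Cons)
      have memS: "\<And>p. (p \<in> {1..length w} \<and> w!(p-1) = a \<and> t0 < p) \<longleftrightarrow> p \<in> S" unfolding S_def by auto
      have g: "sat w val (gtf s (First a # rr) v) \<longleftrightarrow> (\<exists>p\<in>{1..length w}. p < val v \<and> w!(p-1) = a \<and> t0 < p)"
        using IHg Some uv by (auto simp: u_def[symmetric])
      have l: "sat w val (ltf s (First a # rr) v) \<longleftrightarrow>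
         (\<exists>p\<in>{1..length w}. val v < p \<and> w!(p-1) = a \<and> t0 < p) \<and>
         \<not> (\<exists>p\<in>{1..length w}. (p < val v \<or> p = val v) \<and> w!(p-1) = a \<and> t0 < p)"
        using IHg Some uv by (auto simp: u_def[symmetric])
      have g2: "sat w val (gtf s (First a # rr) v) \<longleftrightarrow> (\<exists>p\<in>S. p < val v)"
        unfolding g using memS by blast
      have l2: "sat w val (ltf s (First a # rr) v) \<longleftrightarrow> (\<exists>p\<in>S. val v < p) \<and> \<not>(\<exists>p\<in>S. p < val v \<or> p = val v)"
        unfolding l using memS by blast
      show ?thesis unfolding First[symmetric] VS g2[unfolded First[symmetric]] l2[unfolded First[symmetric]]
        using min_lt[OF fS] min_gt[OF fS] by simp
    next
      case (Last a)
      define S where "S = {i\<in>{1..t0-1}. w ! (i - 1) = a}"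
      have fS: "finite S" unfolding S_def by simp
      have VS: "V s (b # rr) w = opt_max S" using Some Last unfolding S_def by (simp add: V_Cons)
      have memS: "\<And>p. (p \<in> {1..length w} \<and> w!(p-1) = a \<and> p < t0) \<longleftrightarrow> p \<in> S" unfolding S_def using t0le by auto
      have l: "sat w val (ltf s (Last a # rr) v) \<longleftrightarrow> (\<exists>p\<in>{1..length w}. val v < p \<and> w!(p-1) = a \<and> p < t0)"
        using IHl Some uv by (auto simp: u_def[symmetric])
      have g: "sat w val (gtf s (Last a # rr) v) \<longleftrightarrow>
         (\<exists>p\<in>{1..length w}. p < val v \<and> w!(p-1) = a \<and> p < t0) \<and>
         \<not> (\<exists>p\<in>{1..length w}. (val v < p \<or> val v = p) \<and> w!(p-1) = a \<and> p < t0)"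
        using IHl Some uv by (auto simp: u_def[symmetric])
      have l2: "sat w val (ltf s (Last a # rr) v) \<longleftrightarrow> (\<exists>p\<in>S. val v < p)"
        unfolding l using memS by blast
      have g2: "sat w val (gtf s (Last a # rr) v) \<longleftrightarrow> (\<exists>p\<in>S. p < val v) \<and> \<not>(\<exists>p\<in>S. val v < p \<or> val v = p)"
        unfolding g using memS by blast
      show ?thesis unfolding Last[symmetric] VS g2[unfolded Last[symmetric]] l2[unfolded Last[symmetric]]
        using max_lt[OF fS] max_gt[OF fS] by simp
    qed
  qed
qed



lemma sem_eq:
  assumes rr: "rr \<noteq> []" and v: "1 \<le> val v" "val v \<le> length w"
  shows "sat w val (eqf s rr v) \<longleftrightarrow> V s rr w = Some (val v)"
proof -
  obtain b rr0 where br: "rr = b # rr0" using rr by (cases rr) auto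
  note S0 = sem_gl[where val=val and v=v and w=w and s=s and rr=rr0, OF v]
  note S1 = sem_gl[where val=val and v=v and w=w and s=s and rr="b # rr0", OF v]
  show ?thesis
  proof (cases "V s rr0 w")
    case None
    then show ?thesis using S0 br by (cases b) (auto simp: V_Cons)
  next
    case (Some t0)
    have t0le: "t0 \<le> Suc (length w)" using V_le[OF Some] .
    show ?thesis
    proof (cases b)
      case (First a)
      define S where "S = {i\<in>{t0+1..length w}. w ! (i - 1) = a}"
      have fS: "finite S" unfolding S_def by simp
      have VS: "V s (b # rr0) w = opt_min S" using Some First unfolding S_def by (simp add: V_Cons)
      have "sat w val (eqf s rr v) \<longleftrightarrow> val v \<in> S \<and> \<not> (\<exists>t. opt_min S = Some t \<and> t < val v)"
        using S0 S1 VS Some v br First unfolding S_def by auto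
      also have "\<dots> \<longleftrightarrow> opt_min S = Some (val v)" using min_lt[OF fS] min_eq[OF fS] by simp
      finally show ?thesis using VS br by simp
    next
      case (Last a)
      define S where "S = {i\<in>{1..t0-1}. w ! (i - 1) = a}"
      have fS: "finite S" unfolding S_def by simp
      have VS: "V s (b # rr0) w = opt_max S" using Some Last unfolding S_def by (simp add: V_Cons)
      have "sat w val (eqf s rr v) \<longleftrightarrow> val v \<in> S \<and> \<not> (\<exists>t. opt_max S = Some t \<and> val v < t)"
        using S0 S1 VS Some v br Last unfolding S_def by auto
      also have "\<dots> \<longleftrightarrow> opt_max S = Some (val v)" using max_gt[OF fS] max_eq[OF fS] by simp
      finally show ?thesis using VS br by simp
    qed
  qed
qed

definition psi :: "'a bpos list \<Rightarrow> 'a fo2" where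
  "psi r = eqf (case hd r of First _ \<Rightarrow> True | Last _ \<Rightarrow> False) (rev r) X"

lemma psi_sem:
  assumes r: "r \<noteq> []" and p: "p \<in> {1..length w}"
  shows "satx w p (psi r) \<longleftrightarrow> ranker_eval w r = Some p"
proof -
  obtain b rs where br: "r = b # rs" using r by (cases r) auto
  have "V (case hd r of First _ \<Rightarrow> True | Last _ \<Rightarrow> False) (rev r) w = ranker_eval w r"
    unfolding V_def br ranker_eval_st by (cases b) (simp_all add: st_def)
  then show ?thesis unfolding psi_def satx_def using sem_eq[of "rev r" "\<lambda>_. p" X w] r p by simp
qed

lemma psi_fv: "fv (psi r) \<subseteq> {X}"
  unfolding psi_def by (rule fv_eqf)

lemma psi_qd: "qdepth (psi r) \<le> length r"
  unfolding psi_def using qd_eqf[of _ "rev r" X] by simp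

fun bigor :: "'a fo2 list \<Rightarrow> 'a fo2" where
  "bigor [] = Neg FTrue"
| "bigor (f # fs) = Disj f (bigor fs)"

lemma bigor_sat: "sat w val (bigor fs) \<longleftrightarrow> (\<exists>f\<in>set fs. sat w val f)"
  by (induction fs) auto

lemma bigor_fv: "(\<forall>f\<in>set fs. fv f \<subseteq> A) \<Longrightarrow> fv (bigor fs) \<subseteq> A"
  by (induction fs) auto

lemma bigor_qd: "(\<forall>f\<in>set fs. qdepth f \<le> n) \<Longrightarrow> qdepth (bigor fs) \<le> n"
  by (induction fs) auto

lemma finite_bpos: "finite (UNIV :: 'a::finite bpos set)"
proof -
  have "(UNIV :: 'a bpos set) = range First \<union> range Last"
  proof (intro set_eqI iffI)
    fix x :: "'a bpos" show "x \<in> range First \<union> range Last" by (cases x) auto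
  qed simp
  moreover have "finite (range (First :: 'a \<Rightarrow> 'a bpos) \<union> range Last)" by simp
  ultimately show ?thesis by metis
qed

lemma finite_rankers: "finite (rankers_upto n :: 'a::finite bpos list set)"
proof -
  have "rankers_upto n \<subseteq> {xs :: 'a bpos list. set xs \<subseteq> UNIV \<and> length xs \<le> n}"
    unfolding rankers_upto_def by auto
  moreover have "finite {xs :: 'a bpos list. set xs \<subseteq> UNIV \<and> length xs \<le> n}"
    by (rule finite_lists_length_le[OF finite_bpos])
  ultimately show ?thesis by (rule finite_subset)
qed

theorem theorem3p12:
  fixes \<phi> :: "('a::finite) fo2" and n :: nat
  assumes "n \<ge> 1" and "qdepth \<phi> \<le> n" and "unique_position \<phi>"
  shows "\<exists>(k::nat) (\<alpha>::nat \<Rightarrow> 'a fo2) (r::nat \<Rightarrow> 'a bpos list).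
     (\<forall>i\<in>{1..k}. qdepth (\<alpha> i) \<le> n \<and> fv (\<alpha> i) \<subseteq> {X} \<and> r i \<in> rankers_upto n) \<and>
     (\<forall>i\<in>{1..k}. \<forall>j\<in>{1..k}. i \<noteq> j \<longrightarrow>
        (\<forall>w. \<forall>p\<in>{1..length w}. \<not> (satx w p (\<alpha> i) \<and> satx w p (\<alpha> j)))) \<and>
     (\<forall>w. \<forall>p\<in>{1..length w}.
        satx w p \<phi> \<longleftrightarrow> (\<exists>i\<in>{1..k}. satx w p (\<alpha> i) \<and> ranker_eval w (r i) = Some p))"
proof -
  obtain rl where rl: "set rl = (rankers_upto n :: 'a bpos list set)"
    using finite_list[OF finite_rankers] by blast
  define k where "k = length rl"
  define r where "r i = rl ! (i - 1)" for i
  define ps where "ps j = psi (rl ! j)" for j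
  define \<alpha> where "\<alpha> i = Conj \<phi> (Conj (ps (i - 1)) (Neg (bigor (map ps [0..<i-1]))))" for i
  have rlin: "rl ! j \<in> rankers_upto n" if "j < k" for j
    using that rl k_def nth_mem by blast
  have rlne: "rl ! j \<noteq> []" if "j < k" for j
    using rlin[OF that] unfolding rankers_upto_def by auto
  have fvphi: "fv \<phi> \<subseteq> {X}" using assms(3) unfolding unique_position_def by blast
  have ps_sem: "satx w p (ps j) \<longleftrightarrow> ranker_eval w (rl ! j) = Some p"
    if "j < k" "p \<in> {1..length w}" for w p j
    unfolding ps_def using psi_sem[OF rlne[OF that(1)] that(2)] .
  have satx_a: "satx w p (\<alpha> i) \<longleftrightarrow> satx w p \<phi> \<and> satx w p (ps (i - 1)) \<and> \<not> (\<exists>j<i-1. satx w p (ps j))"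
    for w p i
    unfolding \<alpha>_def satx_def by (auto simp: bigor_sat)
  have part1: "\<forall>i\<in>{1..k}. qdepth (\<alpha> i) \<le> n \<and> fv (\<alpha> i) \<subseteq> {X} \<and> r i \<in> rankers_upto n"
  proof
    fix i assume i: "i \<in> {1..k}"
    have ri: "r i \<in> rankers_upto n" unfolding r_def using rlin i by auto
    have psq: "qdepth (ps j) \<le> n" if "j < k" for j
      unfolding ps_def using psi_qd[of "rl ! j"] rlin[OF that] unfolding rankers_upto_def by auto
    have "qdepth (bigor (map ps [0..<i-1])) \<le> n"
      by (rule bigor_qd) (use psq i in auto)
    moreover have "fv (bigor (map ps [0..<i-1])) \<subseteq> {X}"
      by (rule bigor_fv) (auto simp: ps_def psi_fv)
    moreover have "qdepth (ps (i-1)) \<le> n" using psq i by auto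
    moreover have "fv (ps (i-1)) \<subseteq> {X}" by (simp add: ps_def psi_fv)
    ultimately show "qdepth (\<alpha> i) \<le> n \<and> fv (\<alpha> i) \<subseteq> {X} \<and> r i \<in> rankers_upto n"
      using ri assms(2) fvphi unfolding \<alpha>_def by auto
  qed
  have excl: "\<not> (satx w p (\<alpha> i) \<and> satx w p (\<alpha> j))" if "1 \<le> i" "i < j" for w p i j
  proof
    assume "satx w p (\<alpha> i) \<and> satx w p (\<alpha> j)"
    then have "satx w p (ps (i - 1))" "\<not> (\<exists>ja<j-1. satx w p (ps ja))" using satx_a by blast+
    moreover have "i - 1 < j - 1" using that by simp
    ultimately show False by blast
  qed
  have part2: "\<forall>i\<in>{1..k}. \<forall>j\<in>{1..k}. i \<noteq> j \<longrightarrow>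
        (\<forall>w. \<forall>p\<in>{1..length w}. \<not> (satx w p (\<alpha> i) \<and> satx w p (\<alpha> j)))"
  proof (intro ballI impI allI)
    fix i j w p assume ij: "i \<in> {1..k}" "j \<in> {1..k}" "i \<noteq> j"
    then consider "i < j" | "j < i" by arith
    then show "\<not> (satx w p (\<alpha> i) \<and> satx w p (\<alpha> j))"
      by cases (use excl ij in auto)
  qed
  have part3: "\<forall>w. \<forall>p\<in>{1..length w}.
        satx w p \<phi> \<longleftrightarrow> (\<exists>i\<in>{1..k}. satx w p (\<alpha> i) \<and> ranker_eval w (r i) = Some p)"
  proof (intro allI ballI iffI)
    fix w p assume p: "p \<in> {1..length w}" and s: "satx w p \<phi>"
    obtain r0 where r0: "r0 \<in> rankers_upto n" "ranker_eval w r0 = Some p"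
      using K[OF assms(2,3) p s] by blast
    then obtain j where j: "j < k" "rl ! j = r0" using rl unfolding k_def by (metis in_set_conv_nth)
    define j0 where "j0 = (LEAST j. j < k \<and> ranker_eval w (rl ! j) = Some p)"
    have j0: "j0 < k \<and> ranker_eval w (rl ! j0) = Some p"
      unfolding j0_def by (rule LeastI[of _ j]) (use j r0 in simp)
    have j0m: "\<not> ranker_eval w (rl ! j) = Some p" if "j < j0" for j
    proof -
      have "\<not> (j < k \<and> ranker_eval w (rl ! j) = Some p)"
        using not_less_Least[OF that[unfolded j0_def]] by blast
      then show ?thesis using that j0 by simp
    qed
    have "satx w p (\<alpha> (Suc j0))"
      unfolding satx_a using s ps_sem[OF _ p] j0 j0m by auto
    moreover have "ranker_eval w (r (Suc j0)) = Some p" unfolding r_def using j0 by simp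
    moreover have "Suc j0 \<in> {1..k}" using j0 by simp
    ultimately show "\<exists>i\<in>{1..k}. satx w p (\<alpha> i) \<and> ranker_eval w (r i) = Some p" by blast
  next
    fix w p assume "p \<in> {1..length w}" "\<exists>i\<in>{1..k}. satx w p (\<alpha> i) \<and> ranker_eval w (r i) = Some p"
    then show "satx w p \<phi>" using satx_a by blast
  qed
  show ?thesis using part1 part2 part3 by blast
qed

end
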